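(* Let $N\ge7$, $D=\frac{N-2}2$, let $1\le L\le N-1$ be an integer and $J=4L$. Let $q_0\in(0,\infty)$ be the unique number with $q_0^{-2D}+(q_0^2+1)^{-D}=1$. For $k\in\{1,\dots,L\}$ set $\iota_{4k-3}=\iota_{4k-2}=+1$, $\iota_{4k-1}=\iota_{4k}=-1$ and $z^*_{4k-3}=\frac12e_1+\frac{q_0}2e_{k+1}$, $z^*_{4k-2}=-\frac12e_1+\frac{q_0}2e_{k+1}$, $z^*_{4k-1}=\frac12e_1-\frac{q_0}2e_{k+1}$, $z^*_{4k}=-\frac12e_1-\frac{q_0}2e_{k+1}$, where $e_1,\dots,e_N$ is the standard basis of $\mathbb{R}^N$. Then this configuration is degenerate and $A^*$ has at least $L$ linearly independent kernel elements in $[0,\infty)^J$.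
   Context: $A^*_{ij}=\mathbf 1_{i\ne j}\kappa_0\kappa_\infty\frac{\iota_i\iota_j}{|z_i^*-z_j^*|^{N-2}}$ with fixed positive constants $\kappa_0,\kappa_\infty$. A configuration is degenerate if $A^*$ has a nonzero kernel element in $[0,\infty)^J$. *)

theory Defs
  imports Complex_Main
begin

(* Points of R^N are represented as functions nat => real, coordinates 1..N.
   Vectors of R^J are functions nat => real, entries 1..J. *)

definition D :: "nat \<Rightarrow> real" where
  "D N = (real N - 2) / 2"

definition q0 :: "nat \<Rightarrow> real" where
  "q0 N = (THE q. q > 0 \<and> q powr (- 2 * D N) + (q\<^sup>2 + 1) powr (- D N) = 1)"

definition std_basis :: "nat \<Rightarrow> nat \<Rightarrow> real" ("e") where
  "e i = (\<lambda>m. if m = i then 1 else 0)"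

definition edist :: "nat \<Rightarrow> (nat \<Rightarrow> real) \<Rightarrow> (nat \<Rightarrow> real) \<Rightarrow> real" where
  "edist N x y = sqrt (\<Sum>m = 1..N. (x m - y m)\<^sup>2)"

definition Astar :: "nat \<Rightarrow> real \<Rightarrow> real \<Rightarrow> (nat \<Rightarrow> real) \<Rightarrow> (nat \<Rightarrow> nat \<Rightarrow> real)
    \<Rightarrow> nat \<Rightarrow> nat \<Rightarrow> real" where
  "Astar N k0 kinf \<iota> z i j =
     (if i \<noteq> j then k0 * kinf * (\<iota> i * \<iota> j) / (edist N (z i) (z j)) ^ (N - 2) else 0)"

definition nonneg_kernel :: "nat \<Rightarrow> (nat \<Rightarrow> nat \<Rightarrow> real) \<Rightarrow> (nat \<Rightarrow> real) \<Rightarrow> bool" where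
  "nonneg_kernel J A v \<longleftrightarrow>
     (\<forall>j\<in>{1..J}. 0 \<le> v j) \<and> (\<forall>i\<in>{1..J}. (\<Sum>j = 1..J. A i j * v j) = 0)"

definition degenerate :: "nat \<Rightarrow> (nat \<Rightarrow> nat \<Rightarrow> real) \<Rightarrow> bool" where
  "degenerate J A \<longleftrightarrow> (\<exists>v. nonneg_kernel J A v \<and> (\<exists>j\<in>{1..J}. v j \<noteq> 0))"

definition lin_indep_family :: "nat \<Rightarrow> nat \<Rightarrow> (nat \<Rightarrow> nat \<Rightarrow> real) \<Rightarrow> bool" where
  "lin_indep_family J L v \<longleftrightarrow>
     (\<forall>c :: nat \<Rightarrow> real. (\<forall>j\<in>{1..J}. (\<Sum>l = 1..L. c l * v l j) = 0) \<longrightarrow> (\<forall>l\<in>{1..L}. c l = 0))"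

end

theory Submission
  imports Defs
begin


lemma q0_props:
  assumes N: "N \<ge> 7"
  shows "q0 N > 0 \<and> q0 N powr (- 2 * D N) + ((q0 N)\<^sup>2 + 1) powr (- D N) = 1"
proof -
  define a where "a = D N"
  have a5: "a \<ge> 5/2" using N unfolding a_def D_def by simp
  define f where "f = (\<lambda>q::real. q powr (- 2 * a) + (q\<^sup>2 + 1) powr (- a))"
  have mono: "f y < f x" if "0 < x" "x < y" for x y
  proof -
    have "y powr (-2*a) < x powr (-2*a)" using that a5 by (intro powr_less_mono2_neg) auto
    moreover have "(y\<^sup>2+1) powr (-a) < (x\<^sup>2+1) powr (-a)" using that a5
      by (intro powr_less_mono2_neg) (auto intro: power_strict_mono add_pos_nonneg)
    ultimately show ?thesis unfolding f_def by simp
  qed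
  have f1: "f 1 \<ge> 1" unfolding f_def by simp
  have f2: "f 2 \<le> 1"
  proof -
    have "(2::real) powr (-2*a) \<le> 2 powr (-1)" using a5 by (intro powr_mono) auto
    moreover have "(5::real) powr (-a) \<le> 5 powr (-1)" using a5 by (intro powr_mono) auto
    ultimately show ?thesis unfolding f_def by (simp add: powr_minus)
  qed
  have "\<exists>x\<ge>1. x \<le> 2 \<and> f x = 1"
  proof (rule IVT2[of f 2 1 1, OF f2 f1])
    show "\<forall>x. 1 \<le> x \<and> x \<le> 2 \<longrightarrow> isCont f x"
      unfolding f_def by (auto intro!: continuous_intros, smt (verit) zero_le_power2)
  qed simp
  then obtain x where x: "x \<ge> 1" "f x = 1" by blast
  have ex: "\<exists>!q. q > 0 \<and> f q = 1"
  proof (rule ex1I[of _ x])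
    show "x > 0 \<and> f x = 1" using x by simp
    fix y assume y: "y > 0 \<and> f y = 1"
    show "y = x"
    proof (rule ccontr)
      assume "y \<noteq> x"
      then consider "y < x" | "x < y" by linarith
      then show False
      proof cases
        case 1 then show False using mono[of y x] y x by simp
      next
        case 2 then show False using mono[of x y] y x by simp
      qed
    qed
  qed
  have "q0 N = (THE q. q > 0 \<and> f q = 1)" unfolding q0_def f_def a_def by simp
  then show ?thesis using theI'[OF ex] unfolding f_def a_def by simp
qed



definition pt :: "real \<Rightarrow> real \<Rightarrow> nat \<Rightarrow> nat \<Rightarrow> real" where
  "pt a b k = (\<lambda>m. a * e 1 m + b * e (k+1) m)"


lemma edist_pt:
  assumes "1 \<le> k" "k+1 \<le> N" "1 \<le> l" "l+1 \<le> N"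
  shows "edist N (pt a b k) (pt a' b' l) = sqrt ((a-a')\<^sup>2 + (if k = l then (b-b')\<^sup>2 else b\<^sup>2 + b'\<^sup>2))"
proof -
  have pw: "(pt a b k m - pt a' b' l m)\<^sup>2 =
      (if m = 1 then (a-a')\<^sup>2 else 0) + (if m = k+1 then (if k = l then (b-b')\<^sup>2 else b\<^sup>2) else 0)
      + (if m = l+1 \<and> k \<noteq> l then b'\<^sup>2 else 0)" for m
    using assms unfolding pt_def std_basis_def by (auto simp: power2_eq_square algebra_simps)
  have "(\<Sum>m=1..N. (pt a b k m - pt a' b' l m)\<^sup>2) =
     (a-a')\<^sup>2 + (if k = l then (b-b')\<^sup>2 else b\<^sup>2) + (if k \<noteq> l then b'\<^sup>2 else 0)"
    unfolding pw sum.distrib using assms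
    by (simp add: sum.delta)
  then show ?thesis unfolding edist_def by simp
qed

lemma sum4: "(\<Sum>r<(4::nat). g r) = g 0 + g 1 + g 2 + (g 3 :: real)"
  by (simp add: numeral_eq_Suc)

lemma block_sum: "(\<Sum>j=1..4*(L::nat). f j) = (\<Sum>k=1..L. \<Sum>r<4. f (4*k-3+r) :: real)"
proof (induction L)
  case 0 then show ?case by simp
next
  case (Suc L)
  have "(\<Sum>j=1..4*Suc L. f j) = (\<Sum>j=1..4*L. f j) + f (4*L+1) + f (4*L+2) + f (4*L+3) + f (4*L+4)"
    by (simp add: numeral_eq_Suc add_ac)
  then show ?case using Suc by (simp add: sum4 add_ac numeral_eq_Suc)
qed


theorem lemma4p10:
  fixes N L J :: nat and k0 kinf :: real
    and \<iota> :: "nat \<Rightarrow> real" and z :: "nat \<Rightarrow> nat \<Rightarrow> real"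
  assumes "N \<ge> 7" and "1 \<le> L" and "L \<le> N - 1" and "J = 4 * L"
    and "k0 > 0" and "kinf > 0"
    and "\<forall>k\<in>{1..L}. \<iota> (4*k-3) = 1 \<and> \<iota> (4*k-2) = 1 \<and> \<iota> (4*k-1) = -1 \<and> \<iota> (4*k) = -1"
    and "\<forall>k\<in>{1..L}.
           z (4*k-3) = (\<lambda>m. (1/2) * e 1 m + (q0 N / 2) * e (k+1) m) \<and>
           z (4*k-2) = (\<lambda>m. -(1/2) * e 1 m + (q0 N / 2) * e (k+1) m) \<and>
           z (4*k-1) = (\<lambda>m. (1/2) * e 1 m - (q0 N / 2) * e (k+1) m) \<and>
           z (4*k)   = (\<lambda>m. -(1/2) * e 1 m - (q0 N / 2) * e (k+1) m)"
  shows "degenerate J (Astar N k0 kinf \<iota> z) \<and>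
         (\<exists>v :: nat \<Rightarrow> nat \<Rightarrow> real.
            (\<forall>l\<in>{1..L}. nonneg_kernel J (Astar N k0 kinf \<iota> z) (v l)) \<and>
            lin_indep_family J L v)"
proof -
  define q where "q = q0 N"
  define n where "n = N - 2"
  define c where "c = k0 * kinf"
  define A where "A = Astar N k0 kinf \<iota> z"
  have qp: "q > 0" and qeq: "q powr (- 2 * D N) + (q\<^sup>2 + 1) powr (- D N) = 1"
    using q0_props[OF assms(1)] unfolding q_def by auto
  have Dn: "2 * D N = real n" "D N = real n / 2" using assms(1) unfolding D_def n_def by auto
  have t1: "q powr (- 2 * D N) = 1 / q ^ n"
  proof -
    have "q powr (- 2 * D N) = q powr (- real n)" using Dn(1) by simp
    also have "\<dots> = inverse (q ^ n)" by (simp only: powr_minus powr_realpow[OF qp])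
    finally show ?thesis by (simp add: divide_inverse)
  qed
  have t2: "(q\<^sup>2 + 1) powr (- D N) = 1 / sqrt (q\<^sup>2 + 1) ^ n"
  proof -
    have pos: "q\<^sup>2 + 1 > 0" using zero_le_power2[of q] by linarith
    have "sqrt (q\<^sup>2 + 1) ^ n = (q\<^sup>2 + 1) powr (real n / 2)"
    proof -
      have "sqrt (q\<^sup>2 + 1) ^ n = ((q\<^sup>2 + 1) powr (1/2)) ^ n" using pos by (simp only: powr_half_sqrt)
      also have "\<dots> = (q\<^sup>2 + 1) powr (real n * (1/2))" using pos by (simp only: powr_power)
      finally show ?thesis by simp
    qed
    moreover have "(q\<^sup>2 + 1) powr (- D N) = inverse ((q\<^sup>2 + 1) powr (real n / 2))"
      using Dn(2) by (simp only: powr_minus)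
    ultimately show ?thesis by (metis inverse_eq_divide)
  qed
  have heq: "1 / q ^ n + 1 / sqrt (q\<^sup>2 + 1) ^ n = 1" using qeq t1 t2 by simp
  define ax :: "nat \<Rightarrow> real" where "ax r = (if even r then 1/2 else -1/2)" for r
  define by' :: "nat \<Rightarrow> real" where "by' r = (if r < 2 then q/2 else -q/2)" for r
  define sg :: "nat \<Rightarrow> real" where "sg r = (if r < 2 then 1 else -1)" for r
  have hz: "z (4*k-3+r) = pt (ax r) (by' r) k \<and> \<iota> (4*k-3+r) = sg r"
    if "k \<in> {1..L}" "r < 4" for k r
  proof -
    have r: "r = 0 \<or> r = 1 \<or> r = 2 \<or> r = 3" using that by auto
    have k: "k \<ge> 1" using that by auto
    have i1: "4*k-3+1 = 4*k-2" "4*k-3+2 = 4*k-1" "4*k-3+3 = 4*k" using k by auto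
    have Hk: "z (4*k-3) = (\<lambda>m. (1/2) * e 1 m + (q / 2) * e (k+1) m) \<and>
           z (4*k-2) = (\<lambda>m. -(1/2) * e 1 m + (q / 2) * e (k+1) m) \<and>
           z (4*k-1) = (\<lambda>m. (1/2) * e 1 m - (q / 2) * e (k+1) m) \<and>
           z (4*k)   = (\<lambda>m. -(1/2) * e 1 m - (q / 2) * e (k+1) m)"
           "\<iota> (4*k-3) = 1 \<and> \<iota> (4*k-2) = 1 \<and> \<iota> (4*k-1) = -1 \<and> \<iota> (4*k) = -1"
      using assms(7,8) that(1) unfolding q_def by auto
    from r show ?thesis
    proof (elim disjE)
      assume "r = 0" then show ?thesis using Hk
        by (simp add: pt_def ax_def by'_def sg_def)
    next
      assume "r = 1" then show ?thesis using Hk i1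
        by (simp add: pt_def ax_def by'_def sg_def)
    next
      assume "r = 2" then show ?thesis using Hk i1
        by (simp add: pt_def ax_def by'_def sg_def fun_eq_iff)
    next
      assume "r = 3" then show ?thesis using Hk i1
        by (simp add: pt_def ax_def by'_def sg_def fun_eq_iff)
    qed
  qed
  have idx: "(4*k-3+r = 4*l-3+r') \<longleftrightarrow> (k = l \<and> r = r')"
    if "k \<ge> 1" "l \<ge> 1" "r < 4" "r' < 4" for k l r r' :: nat
    using that by presburger
  have entry: "A (4*k-3+r) (4*l-3+r') = (if k = l \<and> r = r' then 0 else
      c * (sg r * sg r') / sqrt ((ax r - ax r')\<^sup>2 +
         (if k = l then (by' r - by' r')\<^sup>2 else (by' r)\<^sup>2 + (by' r')\<^sup>2)) ^ n)"
    if "k \<in> {1..L}" "l \<in> {1..L}" "r < 4" "r' < 4" for k l r r'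
  proof -
    have b: "1 \<le> k" "k+1 \<le> N" "1 \<le> l" "l+1 \<le> N" using that assms(3) by auto
    show ?thesis
      unfolding A_def Astar_def using hz[OF that(1,3)] hz[OF that(2,4)] idx[OF b(1) b(3) that(3,4)]
      edist_pt[OF b] by (simp only: c_def n_def) simp
  qed
  have blk: "(\<Sum>r'<4. A (4*k-3+r) (4*l-3+r')) = 0"
    if "k \<in> {1..L}" "l \<in> {1..L}" "r < 4" for k l r
  proof -
    have r: "r = 0 \<or> r = 1 \<or> r = 2 \<or> r = 3" using that by auto
    have E: "A (4*k-3+r) (4*l-3+r') = (if k = l \<and> r = r' then 0 else
      c * (sg r * sg r') / sqrt ((ax r - ax r')\<^sup>2 +
         (if k = l then (by' r - by' r')\<^sup>2 else (by' r)\<^sup>2 + (by' r')\<^sup>2)) ^ n)" if "r' < 4" for r'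
      using entry[OF \<open>k \<in> _\<close> \<open>l \<in> _\<close> \<open>r < 4\<close> that] .
    have heq2: "c / q ^ n + c / sqrt (1 + q\<^sup>2) ^ n = c"
      using arg_cong[OF heq, of "\<lambda>x. c * x"] by (simp add: algebra_simps)
    have l4: "(0::nat)<4" "(1::nat)<4" "(2::nat)<4" "(3::nat)<4" by simp_all
    have "k = l \<or> k \<noteq> l" by blast
    show ?thesis unfolding sum4 E[OF l4(1)] E[OF l4(2)] E[OF l4(3)] E[OF l4(4)]
      using r
      apply (cases "k = l"; elim disjE; simp add: ax_def by'_def sg_def abs_of_pos[OF qp])
      using heq2 by linarith+
  qed
  define v :: "nat \<Rightarrow> nat \<Rightarrow> real" where "v l j = (if (j+3) div 4 = l then 1 else 0)" for l j
  have vblk: "v l (4*k-3+r) = (if k = l then 1 else 0)" if "k \<ge> 1" "r < 4" for k l r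
  proof -
    have "(4*k-3+r+3) div 4 = k" using that by presburger
    then show ?thesis unfolding v_def by simp
  qed
  have ker: "nonneg_kernel J A (v l)" if l: "l \<in> {1..L}" for l
    unfolding nonneg_kernel_def
  proof (intro conjI ballI)
    fix j show "0 \<le> v l j" unfolding v_def by simp
  next
    fix i assume i: "i \<in> {1..J}"
    define k where "k = (i+3) div 4"
    define r where "r = (i+3) mod 4"
    have i1: "1 \<le> i" "i \<le> 4*L" using i assms(4) by auto
    have ik: "i = 4*k-3+r" "k \<in> {1..L}" "r < 4"
    proof -
      show "i = 4*k-3+r" unfolding k_def r_def using i1 by presburger
      show "k \<in> {1..L}" unfolding k_def using i1 by auto
      show "r < 4" unfolding r_def by simp
    qed
    have "(\<Sum>j=1..J. A i j * v l j) = (\<Sum>k'=1..L. \<Sum>r'<4. A i (4*k'-3+r') * v l (4*k'-3+r'))"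
      unfolding assms(4) by (rule block_sum)
    also have "\<dots> = (\<Sum>k'=1..L. if k' = l then (\<Sum>r'<4. A i (4*k'-3+r')) else 0)"
    proof (rule sum.cong[OF refl])
      fix k' assume k': "k' \<in> {1..L}"
      have "A i (4*k'-3+r') * v l (4*k'-3+r') = (if k' = l then A i (4*k'-3+r') else 0)"
        if "r' \<in> {..<4}" for r'
      proof -
        have "v l (4*k'-3+r') = (if k' = l then 1 else 0)" using vblk[of k' r' l] k' that by simp
        then show ?thesis by simp
      qed
      then have "(\<Sum>r'<4. A i (4*k'-3+r') * v l (4*k'-3+r')) =
          (\<Sum>r'<4. if k' = l then A i (4*k'-3+r') else 0)"
        by (rule sum.cong[OF refl])
      then show "(\<Sum>r'<4. A i (4*k'-3+r') * v l (4*k'-3+r')) =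
          (if k' = l then (\<Sum>r'<4. A i (4*k'-3+r')) else 0)"
        by (cases "k' = l") simp_all
    qed
    also have "\<dots> = (\<Sum>r'<4. A i (4*l-3+r'))" using l by (simp add: sum.delta')
    also have "\<dots> = 0" unfolding ik(1) by (rule blk[OF ik(2) l ik(3)])
    finally show "(\<Sum>j=1..J. A i j * v l j) = 0" .
  qed
  have indep: "lin_indep_family J L v"
    unfolding lin_indep_family_def
  proof (intro allI impI ballI)
    fix c' :: "nat \<Rightarrow> real" and l
    assume H: "\<forall>j\<in>{1..J}. (\<Sum>l = 1..L. c' l * v l j) = 0" and l: "l \<in> {1..L}"
    have "4*l-3 \<in> {1..J}" using l assms(4) by auto
    then have "(\<Sum>l' = 1..L. c' l' * v l' (4*l-3)) = 0" using H by blast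
    moreover have "v l' (4*l-3) = (if l = l' then 1 else 0)" for l'
      using vblk[of l 0 l'] l by simp
    ultimately have "(\<Sum>l' = 1..L. if l = l' then c' l' else 0) = 0"
      by (simp add: if_distrib cong: if_cong)
    then show "c' l = 0" using l by (simp add: sum.delta)
  qed
  have deg: "degenerate J A"
    unfolding degenerate_def
  proof (intro exI conjI)
    show "nonneg_kernel J A (v 1)" using ker assms(2) by auto
    show "\<exists>j\<in>{1..J}. v 1 j \<noteq> 0" using assms(2,4) by (intro bexI[of _ 1]) (auto simp: v_def)
  qed
  show ?thesis unfolding A_def[symmetric] using deg ker indep by blast
qed

end
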